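(* Let $s\ge1$ be a real number and let $X\subseteq Y\subseteq V$. If $X$ is $s$-sparse in $Y$, then $w(X)\le \frac{1}{s}\,w(Y)$.
   Context: Let $G$ be a finite graph with vertex set $V$, $|V|=n$, and $t=\chi_f(G)$. Fix a weight function $w:V\to\mathbb{R}_{\ge0}$ with $w(V)=t$ and $w(I)\le 1$ for every independent set $I$ of $G$, where $w(A)=\sum_{v\in A}w(v)$. List the vertices as $v_1,\dots,v_n$ so that $w(v_{i+1})\le w(v_i)$ for all $i$. Every subset $X\subseteq V$ is ordered according to this ordering of $V$, and $X_k$ denotes the set of the first $k$ elements of $X$; for real $s\ge1$, $X_s:=X_{\lfloor s\rfloor}$. For real $s\ge1$ and $Y\subseteq V$, a nonempty subset $X\subseteq Y$ is called $s$-principal in $Y$ if $X\subseteq Y_{s|X|}$ (i.e., all elements of $X$ are among the first $\lfloor s|X|\rfloor$ elements of $Y$). A subset $X\subseteq Y$ is called $s$-sparse in $Y$ if $X$ contains no subset that is $s$-principal in $Y$. *)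

theory Defs
  imports Complex_Main
begin

definition simple_graph :: "'a set \<Rightarrow> ('a \<Rightarrow> 'a \<Rightarrow> bool) \<Rightarrow> bool" where
  "simple_graph V E \<longleftrightarrow> finite V \<and> (\<forall>u v. E u v \<longrightarrow> u \<in> V \<and> v \<in> V)
     \<and> (\<forall>u v. E u v \<longrightarrow> E v u) \<and> (\<forall>v. \<not> E v v)"

definition independent :: "'a set \<Rightarrow> ('a \<Rightarrow> 'a \<Rightarrow> bool) \<Rightarrow> 'a set \<Rightarrow> bool" where
  "independent V E I \<longleftrightarrow> I \<subseteq> V \<and> (\<forall>u\<in>I. \<forall>v\<in>I. \<not> E u v)"

definition frac_chromatic :: "'a set \<Rightarrow> ('a \<Rightarrow> 'a \<Rightarrow> bool) \<Rightarrow> real" where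
  "frac_chromatic V E = Inf {(\<Sum>I\<in>{I. independent V E I}. f I) | f.
      (\<forall>I. 0 \<le> f I) \<and> (\<forall>v\<in>V. 1 \<le> (\<Sum>I\<in>{I. independent V E I \<and> v \<in> I}. f I))}"

text \<open>The fixed ordering of V is a list vs (v_1,...,v_n). A subset Y is ordered
  accordingly; prefix Y k is the set of its first k elements, and for real s,
  Y_s = Y_{floor s}.\<close>
definition prefix_set :: "'a list \<Rightarrow> 'a set \<Rightarrow> nat \<Rightarrow> 'a set" where
  "prefix_set vs Y k = set (take k (filter (\<lambda>v. v \<in> Y) vs))"

definition principal :: "'a list \<Rightarrow> real \<Rightarrow> 'a set \<Rightarrow> 'a set \<Rightarrow> bool" where
  "principal vs s Y X \<longleftrightarrow> X \<noteq> {} \<and> X \<subseteq> Y \<and>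
     X \<subseteq> prefix_set vs Y (nat \<lfloor>s * real (card X)\<rfloor>)"

definition sparse :: "'a list \<Rightarrow> real \<Rightarrow> 'a set \<Rightarrow> 'a set \<Rightarrow> bool" where
  "sparse vs s Y X \<longleftrightarrow> X \<subseteq> Y \<and> \<not> (\<exists>Z\<subseteq>X. principal vs s Y Z)"

end

theory Submission
  imports Defs
begin

lemma key:
  fixes s :: real and ys :: "'a list"
  assumes "distinct ys" "\<forall>v\<in>set ys. 0 \<le> f v" "sorted_wrt (\<lambda>x y. f y \<le> f x) ys"
    "X \<subseteq> set ys" "1 \<le> s"
    "\<forall>Z. Z \<subseteq> X \<and> Z \<noteq> {} \<longrightarrow> \<not> Z \<subseteq> set (take (nat \<lfloor>s * real (card Z)\<rfloor>) ys)"
  shows "s * (\<Sum>v\<in>X. f v) \<le> (\<Sum>v\<in>set ys. f v)"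
  using assms
proof (induction ys arbitrary: f X rule: rev_induct)
  case Nil
  then show ?case by simp
next
  case (snoc y ys)
  define c where "c = f y"
  define g where "g x = f x - c" for x
  have c0: "0 \<le> c" using snoc.prems(2) by (simp add: c_def)
  have finX: "finite X" using snoc.prems(4) finite_subset by blast
  have sortf: "sorted_wrt (\<lambda>x y. f y \<le> f x) ys" and lastf: "\<forall>x\<in>set ys. f y \<le> f x"
    using snoc.prems(3) by (auto simp: sorted_wrt_append)
  have yn: "y \<notin> set ys" using snoc.prems(1) by simp
  have gnn: "\<forall>v\<in>set ys. 0 \<le> g v" using lastf by (simp add: g_def c_def)
  have gsort: "sorted_wrt (\<lambda>x y. g y \<le> g x) ys"
    using sortf by (simp add: g_def)
  have Xs: "X - {y} \<subseteq> set ys" using snoc.prems(4) by auto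
  have P: "\<forall>Z. Z \<subseteq> X - {y} \<and> Z \<noteq> {} \<longrightarrow> \<not> Z \<subseteq> set (take (nat \<lfloor>s * real (card Z)\<rfloor>) ys)"
  proof (intro allI impI)
    fix Z assume Z: "Z \<subseteq> X - {y} \<and> Z \<noteq> {}"
    define k where "k = nat \<lfloor>s * real (card Z)\<rfloor>"
    have sub: "set (take k ys) \<subseteq> set (take k (ys @ [y]))" by (simp add: set_take_subset_set_take)
    have "Z \<subseteq> X \<and> Z \<noteq> {}" using Z by auto
    then have "\<not> Z \<subseteq> set (take k (ys @ [y]))" using snoc.prems(6) unfolding k_def by simp
    then show "\<not> Z \<subseteq> set (take (nat \<lfloor>s * real (card Z)\<rfloor>) ys)"
      using sub unfolding k_def by blast
  qed
  have IH: "s * (\<Sum>v\<in>X - {y}. g v) \<le> (\<Sum>v\<in>set ys. g v)"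
    using snoc.IH[of g "X - {y}"] snoc.prems(1,5) gnn gsort Xs P by simp
  have card: "s * real (card X) \<le> real (length ys + 1)"
  proof (cases "X = {}")
    case True then show ?thesis using snoc.prems(5) by simp
  next
    case False
    have "\<not> X \<subseteq> set (take (nat \<lfloor>s * real (card X)\<rfloor>) (ys @ [y]))"
      using snoc.prems(6) False by blast
    then have "\<not> length (ys @ [y]) \<le> nat \<lfloor>s * real (card X)\<rfloor>"
      using snoc.prems(4) by auto
    then have "nat \<lfloor>s * real (card X)\<rfloor> < length ys + 1" by simp
    then have "\<lfloor>s * real (card X)\<rfloor> < int (length ys + 1)" by linarith
    then show ?thesis by linarith
  qed
  have gy: "g y = 0" by (simp add: g_def c_def)
  have sX: "(\<Sum>v\<in>X. f v) = (\<Sum>v\<in>X. g v) + c * real (card X)"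
    by (simp add: g_def sum_subtractf)
  have sX2: "(\<Sum>v\<in>X. g v) = (\<Sum>v\<in>X - {y}. g v)"
  proof (cases "y \<in> X")
    case True
    then show ?thesis using finX gy by (simp add: sum.remove)
  next
    case False then show ?thesis by simp
  qed
  have sY: "(\<Sum>v\<in>set (ys @ [y]). f v) = (\<Sum>v\<in>set ys. g v) + c * real (length ys + 1)"
  proof -
    have "(\<Sum>v\<in>set (ys @ [y]). f v) = (\<Sum>v\<in>set ys. f v) + f y" using yn by simp
    also have "(\<Sum>v\<in>set ys. f v) = (\<Sum>v\<in>set ys. g v) + c * real (length ys)"
      using snoc.prems(1) distinct_card[of ys] by (simp add: g_def sum_subtractf)
    finally show ?thesis by (simp add: c_def algebra_simps)
  qed
  have "s * (c * real (card X)) \<le> c * real (length ys + 1)"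
    using mult_left_mono[OF card c0] by (simp add: algebra_simps)
  then show ?case using IH sX sX2 sY by (simp add: algebra_simps)
qed

theorem lemma4:
  fixes V :: "'a set" and E :: "'a \<Rightarrow> 'a \<Rightarrow> bool" and w :: "'a \<Rightarrow> real"
    and vs :: "'a list" and s :: real and X Y :: "'a set"
  assumes G: "simple_graph V E"
    and w_nonneg: "\<forall>v\<in>V. 0 \<le> w v"
    and w_total: "(\<Sum>v\<in>V. w v) = frac_chromatic V E"
    and w_indep: "\<forall>I. independent V E I \<longrightarrow> (\<Sum>v\<in>I. w v) \<le> 1"
    and vs_enum: "distinct vs" "set vs = V"
    and vs_sorted: "\<forall>i. Suc i < length vs \<longrightarrow> w (vs ! Suc i) \<le> w (vs ! i)"
    and s: "1 \<le> s"
    and XY: "X \<subseteq> Y" "Y \<subseteq> V"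
    and sp: "sparse vs s Y X"
  shows "(\<Sum>v\<in>X. w v) \<le> (1 / s) * (\<Sum>v\<in>Y. w v)"
proof -
  define ys where "ys = filter (\<lambda>v. v \<in> Y) vs"
  have tr: "transp (\<lambda>x y. w y \<le> w x)" by (auto simp: transp_def)
  have "sorted_wrt (\<lambda>x y. w y \<le> w x) vs"
    using vs_sorted by (simp add: sorted_wrt_iff_nth_Suc_transp[OF tr])
  then have so: "sorted_wrt (\<lambda>x y. w y \<le> w x) ys" unfolding ys_def by (rule sorted_wrt_filter)
  have sy: "set ys = Y" using XY vs_enum by (auto simp: ys_def)
  have dy: "distinct ys" using vs_enum by (simp add: ys_def)
  have P: "\<forall>Z. Z \<subseteq> X \<and> Z \<noteq> {} \<longrightarrow> \<not> Z \<subseteq> set (take (nat \<lfloor>s * real (card Z)\<rfloor>) ys)"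
    using sp XY unfolding sparse_def principal_def prefix_set_def ys_def by auto
  have "s * (\<Sum>v\<in>X. w v) \<le> (\<Sum>v\<in>set ys. w v)"
    using key[OF dy _ so _ s P] w_nonneg sy XY by auto
  then show ?thesis using s sy by (simp add: field_simps)
qed

end
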